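(* Let $k\ge2$ and $n\le0$ with $\mathcal{F}_{n,k}\not\equiv0$, and write $q=q_{n,k}$, $r=r_{n,k}$. Write $\mathcal{F}_{n,k}(x)=x^rP_{n,k}(x^k)$ with $P_{n,k}(\xi)\in\mathbb{Z}[\xi]$ of degree $N=N_{n,k}$, where $N=q-1$ if $r=0$ and $N=q-r$ if $1\le r\le k-1$. Let $\xi_1,\dots,\xi_N$ be its roots counted with multiplicity, and $\sigma_h$ their $h$-th elementary symmetric polynomial. Then, for $h=1,\dots,N$, $$\sigma_h=\begin{cases}(-1)^hC_k\bigl(-(h+1),\,|n|+1-k(h+1)\bigr),& r=0,\\[4pt] (-1)^{h+r}\,C_k\bigl(-(h+r),\,|n|+1-k(h+r)\bigr)\Big/\binom{q-1}{r-1},& 1\le r\le k-1.\end{cases}$$ Moreover, if $N\ge1$, $$\sum_{j=1}^N\xi_j=\begin{cases}-(2q-3),& r=0,\ k=2,\\ -(q-1),& r=0,\ k\ge3,\\ -\dfrac{(r+1)(q-r)}{r},& 1\le r\le k-1,\end{cases}\qquad \prod_{j=1}^N\xi_j=\begin{cases}(-1)^N,& r=0,\\ (-1)^N\dfrac{q}{r},& 1\le r\le k-1.\end{cases}$$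
   Context: For $k\ge2$, the polynomials $\mathcal{F}_{n,k}(x)\in\mathbb{Z}[x]$ ($n\in\mathbb{Z}$) are defined by $\mathcal{F}_{1,k}=1$, $\mathcal{F}_{n,k}=0$ for $n=0,-1,\dots,-(k-2)$, and $\mathcal{F}_{n,k}(x)=\sum_{j=1}^{k}x^{k-j}\mathcal{F}_{n-j,k}(x)$ for all $n\in\mathbb{Z}$. This recurrence is used upwards for $n\ge2$, and downwards for $n\le-(k-1)$ as $\mathcal{F}_{n,k}=\mathcal{F}_{n+k,k}-\sum_{j=1}^{k-1}x^j\mathcal{F}_{n+j,k}$. For $n\le0$: $q_{n,k}=\lfloor(|n|+1)/k\rfloor$, and $r_{n,k}\in\{0,\dots,k-1\}$ is the residue of $|n|+1$ modulo $k$, so $|n|+1=kq_{n,k}+r_{n,k}$. For integers $m<0$ and $j\ge0$, $C_k(m,j)$ is the coefficient of $x^j$ in the formal power series $1/(1+x+\dots+x^{k-1})^{|m|}$. *)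

theory Defs
  imports "HOL-Computational_Algebra.Computational_Algebra"
begin

text \<open>Downward part: Fneg k m = F_{1-m,k} for m :: nat.
  Fneg k 0 = F_1 = 1, Fneg k m = F_{1-m} = 0 for 1 \<le> m \<le> k-1,
  and for m \<ge> k: F_{1-m} = F_{1-m+k} - sum_{j=1}^{k-1} x^j F_{1-m+j}.\<close>
function Fneg :: "nat \<Rightarrow> nat \<Rightarrow> int poly" where
  "Fneg k m = (if k < 2 then 0 else if m = 0 then 1 else if m < k then 0
     else Fneg k (m - k) - (\<Sum>j\<in>{1..k-1}. monom 1 j * Fneg k (m - j)))"
  by auto
termination
  by (relation "measure (\<lambda>(k, m). m)") auto

text \<open>Upward part: Fup k m = F_{m-(k-2),k}. Values 0 for m \<le> k-2, 1 for m = k-1,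
  and F_n = sum_{j=1}^k x^{k-j} F_{n-j} otherwise.\<close>
function Fup :: "nat \<Rightarrow> nat \<Rightarrow> int poly" where
  "Fup k m = (if k < 2 then 0 else if m < k - 1 then 0 else if m = k - 1 then 1
     else (\<Sum>j\<in>{1..k}. monom 1 (k - j) * Fup k (m - j)))"
  by auto
termination
  by (relation "measure (\<lambda>(k, m). m)") auto

definition Fpoly :: "nat \<Rightarrow> int \<Rightarrow> int poly" where
  "Fpoly k n = (if n \<ge> 2 - int k then Fup k (nat (n + int k - 2)) else Fneg k (nat (1 - n)))"

definition qnk :: "int \<Rightarrow> nat \<Rightarrow> nat" where
  "qnk n k = nat (\<bar>n\<bar> + 1) div k"

definition rnk :: "int \<Rightarrow> nat \<Rightarrow> nat" where
  "rnk n k = nat (\<bar>n\<bar> + 1) mod k"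

definition Ck :: "nat \<Rightarrow> int \<Rightarrow> int \<Rightarrow> rat" where
  "Ck k m j = (if j < 0 then 0 else
     fps_nth (inverse ((\<Sum>i<k. (fps_X :: rat fps) ^ i) ^ nat \<bar>m\<bar>)) (nat j))"

definition esym :: "nat \<Rightarrow> complex list \<Rightarrow> complex" where
  "esym h xs = (\<Sum>S | S \<subseteq> {..<length xs} \<and> card S = h. \<Prod>i\<in>S. xs ! i)"

end

theory Submission
  imports Defs
begin

declare Fneg.simps[simp del] Fup.simps[simp del]

definition SS :: "nat \<Rightarrow> rat fps" where "SS k = (\<Sum>i<k. fps_X ^ i)"
definition cc :: "nat \<Rightarrow> nat \<Rightarrow> nat \<Rightarrow> rat" where
  "cc k p n = fps_nth (inverse (SS k ^ p)) n"

lemma SS_nth: "SS k $ n = (if n < k then 1 else 0)"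
  unfolding SS_def by (simp add: fps_sum_nth fps_X_power_nth)

lemma SS_0: "k \<ge> 1 \<Longrightarrow> SS k $ 0 \<noteq> 0"
  by (simp add: SS_nth)

lemma cc_0: "cc k 0 n = (if n = 0 then 1 else 0)"
  unfolding cc_def by simp

lemma SS_inv_rec:
  assumes "k \<ge> 1" "p \<ge> 1"
  shows "SS k * inverse (SS k ^ p) = inverse (SS k ^ (p - 1))"
proof -
  have nz: "(SS k ^ p) $ 0 \<noteq> 0" using SS_0[OF assms(1)] by (simp add: fps_nth_power_0)
  have "SS k ^ (p - 1) * (SS k * inverse (SS k ^ p)) = SS k ^ p * inverse (SS k ^ p)"
    using assms(2) by (metis (no_types, lifting) ab_semigroup_mult_class.mult_ac(1) le_add_diff_inverse2 mult.commute power_Suc2 Suc_eq_plus1 plus_1_eq_Suc)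
  also have "\<dots> = 1" using inverse_mult_eq_1'[OF nz] .
  finally show ?thesis by (rule fps_inverse_unique[symmetric])
qed

lemma cc_rec:
  assumes "k \<ge> 1" "p \<ge> 1"
  shows "cc k (p - 1) n = (\<Sum>i\<in>{0..k-1}. if n < i then 0 else cc k p (n - i))"
proof -
  have "cc k (p - 1) n = (SS k * inverse (SS k ^ p)) $ n"
    unfolding cc_def using SS_inv_rec[OF assms] by simp
  also have "\<dots> = (\<Sum>i=0..n. SS k $ i * cc k p (n - i))"
    unfolding cc_def fps_mult_nth by simp
  also have "\<dots> = (\<Sum>i\<in>{0..min n (k-1)}. cc k p (n - i))"
    by (rule sum.mono_neutral_cong_right) (use assms in \<open>auto simp: SS_nth\<close>)
  also have "\<dots> = (\<Sum>i\<in>{0..k-1}. if n < i then 0 else cc k p (n - i))"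
    by (rule sum.mono_neutral_cong_left) (use assms in auto)
  finally show ?thesis .
qed

definition gcl :: "nat \<Rightarrow> nat \<Rightarrow> nat \<Rightarrow> rat" where
  "gcl k m e = (if e \<le> m \<and> k dvd (m - e) then cc k ((m - e) div k) e else 0)"

lemma Fneg_cl:
  assumes k: "k \<ge> 2"
  shows "(of_int (coeff (Fneg k m) e) :: rat) = gcl k m e"
proof (induction m arbitrary: e rule: less_induct)
  case (less m)
  show ?case
  proof (cases "m < k")
    case True
    then show ?thesis using k
      by (subst Fneg.simps) (auto simp: gcl_def cc_0 dvd_imp_le)
  next
    case False
    hence mk: "m \<ge> k" by simp
    have eq: "Fneg k m = Fneg k (m - k) - (\<Sum>j\<in>{1..k-1}. monom 1 j * Fneg k (m - j))"
      using k mk by (subst Fneg.simps) auto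
    have "(of_int (coeff (Fneg k m) e) :: rat) =
       of_int (coeff (Fneg k (m - k)) e) - (\<Sum>j\<in>{1..k-1}. if e < j then 0 else of_int (coeff (Fneg k (m - j)) (e - j)))"
      unfolding eq by (simp add: coeff_sum coeff_monom_mult of_int_sum) (intro sum.cong; simp)
    also have "\<dots> = gcl k (m - k) e - (\<Sum>j\<in>{1..k-1}. if e < j then 0 else gcl k (m - j) (e - j))"
    proof (intro arg_cong2[where f="(-)"] sum.cong refl)
      show "of_int (coeff (Fneg k (m - k)) e) = gcl k (m - k) e" using less[of "m - k" e] k mk by simp
    next
      fix j assume j: "j \<in> {1..k-1}"
      have "of_int (coeff (Fneg k (m - j)) (e - j)) = gcl k (m - j) (e - j)"
        by (rule less) (use j k mk in auto)
      then show "(if e < j then 0 else (of_int (coeff (Fneg k (m - j)) (e - j)) :: rat)) =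
        (if e < j then 0 else gcl k (m - j) (e - j))" by simp
    qed
    also have "\<dots> = gcl k m e"
    proof (cases "e \<le> m \<and> k dvd (m - e)")
      case False
      have "gcl k (m - k) e = 0"
      proof (cases "e \<le> m - k")
        case True
        have "\<not> k dvd (m - k - e)"
        proof
          assume "k dvd (m - k - e)"
          moreover have "m - e = (m - k - e) + k" using True mk by simp
          ultimately have "k dvd (m - e)" by simp
          with False True show False by simp
        qed
        then show ?thesis by (simp add: gcl_def)
      qed (simp add: gcl_def)
      moreover have "(\<Sum>j\<in>{1..k-1}. if e < j then 0 else gcl k (m - j) (e - j)) = 0"
        using False k mk by (intro sum.neutral) (auto simp: gcl_def)
      ultimately show ?thesis using False by (auto simp add: gcl_def)
    next
      case True
      define p where "p = (m - e) div k"
      have mp: "m - e = k * p" using True by (simp add: p_def)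
      have sumeq: "(\<Sum>j\<in>{1..k-1}. if e < j then 0 else gcl k (m - j) (e - j))
           = (\<Sum>j\<in>{1..k-1}. if e < j then 0 else cc k p (e - j))"
        using True mk k by (intro sum.cong) (auto simp: gcl_def p_def)
      show ?thesis
      proof (cases "p = 0")
        case True
        hence "e = m" using mp \<open>e \<le> m \<and> k dvd (m - e)\<close> by simp
        then show ?thesis using sumeq k mk True
          by (auto simp: gcl_def cc_0 intro!: sum.neutral)
      next
        case False
        have g1: "gcl k (m - k) e = cc k (p - 1) e"
        proof -
          have "k \<le> m - e" using mp False k by (metis dvd_imp_le dvd_triv_left le_0_eq mult_is_0 not_le zero_less_iff_neq_zero)
          moreover have "m - k - e = k * (p - 1)" using mp by (simp add: right_diff_distrib')
          ultimately show ?thesis using k by (simp add: gcl_def)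
        qed
        have "cc k (p - 1) e = cc k p e + (\<Sum>j\<in>{1..k-1}. if e < j then 0 else cc k p (e - j))"
          using cc_rec[of k p e] False k by (simp add: sum.atLeast_Suc_atMost)
        then show ?thesis using g1 sumeq True by (simp add: gcl_def p_def)
      qed
    qed
    finally show ?thesis .
  qed
qed

definition BB :: "nat \<Rightarrow> nat \<Rightarrow> rat fps" where
  "BB k p = Abs_fps (\<lambda>n. if k dvd n then of_nat ((n div k + p - 1) choose (n div k)) else 0)"

lemma onemX_pow_nth: "((1 - fps_X) ^ p :: rat fps) $ i = (-1) ^ i * of_nat (p choose i)"
proof (induction p arbitrary: i)
  case 0
  then show ?case by (simp add: fps_one_nth)
next
  case (Suc p)
  have e: "((1 - fps_X) ^ Suc p :: rat fps) = (1 - fps_X) ^ p - fps_X * (1 - fps_X) ^ p"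
    by (simp add: algebra_simps)
  have "((1 - fps_X) ^ Suc p :: rat fps) $ i = ((1 - fps_X) ^ p) $ i - (if i = 0 then 0 else ((1 - fps_X) ^ p) $ (i - 1))"
    by (simp only: e fps_sub_nth fps_X_mult_nth)
  also have "\<dots> = (-1) ^ i * of_nat (Suc p choose i)"
  proof (cases i)
    case 0 then show ?thesis by (simp add: Suc)
  next
    case (Suc j) then show ?thesis by (simp add: Suc.IH algebra_simps)
  qed
  finally show ?case .
qed

lemma BB_step:
  assumes k: "k \<ge> 1"
  shows "BB k (Suc p) * (1 - fps_X ^ k) = BB k p"
proof (rule fps_ext)
  fix n
  have "(BB k (Suc p) * (1 - fps_X ^ k)) $ n = BB k (Suc p) $ n - (fps_X ^ k * BB k (Suc p)) $ n"
    by (simp add: algebra_simps)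
  also have "\<dots> = BB k (Suc p) $ n - (if n < k then 0 else BB k (Suc p) $ (n - k))"
    by (simp add: fps_X_power_mult_nth)
  also have "\<dots> = BB k p $ n"
  proof (cases "k dvd n")
    case False
    moreover have "n \<ge> k \<Longrightarrow> \<not> k dvd (n - k)" using False k
      by (metis dvd_add_triv_right_iff le_add_diff_inverse2)
    ultimately show ?thesis by (auto simp: BB_def)
  next
    case True
    then obtain j where nj: "n = k * j" by blast
    show ?thesis
    proof (cases j)
      case 0
      then show ?thesis using nj k by (simp add: BB_def)
    next
      case (Suc i)
      have "n - k = k * i" using nj Suc by (simp add: algebra_simps)
      moreover have "\<not> n < k" using nj Suc k by simp
      ultimately show ?thesis using nj Suc k
        by (simp add: BB_def)
    qed
  qed
  finally show "(BB k (Suc p) * (1 - fps_X ^ k)) $ n = BB k p $ n" .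
qed

lemma BB_inv:
  assumes k: "k \<ge> 1"
  shows "BB k p * (1 - fps_X ^ k) ^ p = 1"
proof (induction p)
  case 0
  show ?case
  proof (rule fps_ext)
    fix n
    show "(BB k 0 * (1 - fps_X ^ k) ^ 0) $ n = (1 :: rat fps) $ n"
      using k by (auto simp: BB_def fps_one_nth elim!: dvdE)
  qed
next
  case (Suc p)
  have "BB k (Suc p) * (1 - fps_X ^ k) ^ Suc p = (BB k (Suc p) * (1 - fps_X ^ k)) * (1 - fps_X ^ k) ^ p"
    by (simp add: algebra_simps)
  also have "\<dots> = 1" using BB_step[OF k] Suc by simp
  finally show ?case .
qed

lemma SS_mul: "SS k * (1 - fps_X) = 1 - fps_X ^ k"
  unfolding SS_def using one_diff_power_eq[of "fps_X :: rat fps" k] by (simp add: mult.commute)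

lemma inv_SS:
  assumes k: "k \<ge> 1"
  shows "inverse (SS k ^ p) = (1 - fps_X) ^ p * BB k p"
proof (rule fps_inverse_unique)
  have "SS k ^ p * ((1 - fps_X) ^ p * BB k p) = (SS k * (1 - fps_X)) ^ p * BB k p"
    by (simp only: power_mult_distrib mult.assoc)
  also have "\<dots> = 1" using BB_inv[OF k, of p] by (simp add: SS_mul mult.commute)
  finally show "SS k ^ p * ((1 - fps_X) ^ p * BB k p) = 1" .
qed

lemma cc_formula:
  assumes k: "k \<ge> 1"
  shows "cc k p n = (\<Sum>i=0..n. (-1) ^ i * of_nat (p choose i) *
     (if k dvd (n - i) then of_nat (((n - i) div k + p - 1) choose ((n - i) div k)) else 0))"
  unfolding cc_def inv_SS[OF k] fps_mult_nth onemX_pow_nth by (simp add: BB_def)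

lemma cc_spec:
  assumes k: "k \<ge> 1" and s: "s < k" and p: "p < s + k \<or> j = 0" and n: "n = k * j + s"
  shows "cc k p n = (if s \<le> p then (-1) ^ s * of_nat (p choose s) * of_nat ((j + p - 1) choose j) else 0)"
proof -
  define t where "t i = ((-1) ^ i * of_nat (p choose i) *
     (if k dvd (n - i) then of_nat (((n - i) div k + p - 1) choose ((n - i) div k)) else 0) :: rat)" for i
  have "cc k p n = (\<Sum>i\<in>{0..n}. t i)" unfolding t_def cc_formula[OF k] ..
  also have "\<dots> = (\<Sum>i\<in>{s}. t i)"
  proof (rule sum.mono_neutral_right)
    show "{s} \<subseteq> {0..n}" using n by auto
    show "\<forall>i\<in>{0..n} - {s}. t i = 0"
    proof
      fix i assume i: "i \<in> {0..n} - {s}"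
      show "t i = 0"
      proof (cases "p < i")
        case True then show ?thesis by (simp add: t_def)
      next
        case False
        have "\<not> k dvd (n - i)"
        proof
          assume dv: "k dvd (n - i)"
          show False
          proof (cases "i \<le> s")
            case True
            have "n - i = k * j + (s - i)" using n True by simp
            with dv have "k dvd (s - i)" by (simp add: dvd_add_right_iff)
            moreover have "0 < s - i" "s - i < k" using True i s by auto
            ultimately show False using dvd_imp_le by fastforce
          next
            case False
            define d where "d = i - s"
            have "j \<noteq> 0"
            proof
              assume "j = 0" then show False using False i n by simp
            qed
            then have d: "0 < d" "d < k" using False \<open>\<not> p < i\<close> p by (auto simp: d_def)
            have "n - i = k * j - d" using n False i by (auto simp: d_def)
            moreover have "d \<le> k * j" using n False i by (auto simp: d_def)
            ultimately have "k dvd (k * j - (n - i))" using dv by (metis dvd_diff_nat dvd_triv_left)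
            moreover have "k * j - (n - i) = d" using \<open>n - i = k * j - d\<close> \<open>d \<le> k * j\<close> by simp
            ultimately show False using d dvd_imp_le by fastforce
          qed
        qed
        then show ?thesis by (simp add: t_def)
      qed
    qed
  qed simp
  also have "\<dots> = t s" by simp
  also have "\<dots> = (if s \<le> p then (-1) ^ s * of_nat (p choose s) * of_nat ((j + p - 1) choose j) else 0)"
    using n k by (auto simp: t_def)
  finally show ?thesis .
qed

lemma cc_small:
  assumes k: "k \<ge> 1" and n: "n < k"
  shows "cc k p n = (-1) ^ n * of_nat (p choose n)"
proof -
  have "cc k p n = (if n \<le> p then (-1) ^ n * of_nat (p choose n) * of_nat ((0 + p - 1) choose 0) else 0)"
    by (rule cc_spec[OF k n]) auto
  then show ?thesis by auto
qed

lemma cc_2_2: "cc 2 2 (2 * j) = 2 * of_nat j + 1"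
proof (cases j)
  case 0
  then show ?thesis using cc_small[of 2 0 2] by simp
next
  case (Suc j')
  define t where "t i = ((-1) ^ i * of_nat (2 choose i) *
     (if 2 dvd (2 * j - i) then of_nat (((2 * j - i) div 2 + 2 - 1) choose ((2 * j - i) div 2)) else 0) :: rat)" for i
  have "cc 2 2 (2 * j) = (\<Sum>i\<in>{0..2*j}. t i)" unfolding t_def using cc_formula[of 2 2 "2 * j"] by simp
  also have "\<dots> = (\<Sum>i\<in>{0,1,2}. t i)"
    by (rule sum.mono_neutral_right) (use Suc in \<open>auto simp: t_def\<close>)
  also have "\<dots> = t 0 + t 1 + t 2" by simp
  also have "t 0 = of_nat j + 1" by (simp add: t_def)
  also have "t 1 = 0" using Suc by (simp add: t_def)
  also have "t 2 = of_nat j"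
  proof -
    have "2 * j - 2 = 2 * j'" using Suc by simp
    then show ?thesis using Suc by (simp add: t_def)
  qed
  finally show ?thesis by simp
qed

lemma coeff_pcompose_monom:
  fixes P :: "'a::comm_semiring_1 poly"
  assumes k: "k > 0"
  shows "coeff (pcompose P (monom 1 k)) e = (if k dvd e then coeff P (e div k) else 0)"
proof (induction P arbitrary: e rule: pCons_induct)
  case 0
  then show ?case by simp
next
  case (pCons a p)
  have "coeff (pcompose (pCons a p) (monom 1 k)) e =
        (if e = 0 then a else 0) + (if e < k then 0 else coeff (pcompose p (monom 1 k)) (e - k))"
    by (simp add: pcompose_pCons coeff_monom_mult coeff_pCons split: nat.split)
  also have "\<dots> = (if k dvd e then coeff (pCons a p) (e div k) else 0)"
  proof (cases "e < k")
    case True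
    then show ?thesis using k by (cases "e = 0") (auto dest: dvd_imp_le)
  next
    case False
    then have e: "e = (e - k) + k" by simp
    have dv: "k dvd e \<longleftrightarrow> k dvd (e - k)" by (subst e) simp
    have dd: "e div k = Suc ((e - k) div k)" using k by (subst e) simp
    show ?thesis using False k pCons.IH[of "e - k"] by (simp add: dv dd)
  qed
  finally show ?case .
qed

lemma Fpoly_neg:
  assumes k: "k \<ge> 2" and n: "n \<le> 0"
  shows "Fpoly k n = Fneg k (nat (1 - n))"
proof (cases "n \<ge> 2 - int k")
  case True
  have "Fup k (nat (n + int k - 2)) = 0" using True n k by (subst Fup.simps) auto
  moreover have "Fneg k (nat (1 - n)) = 0" using True n k by (subst Fneg.simps) auto
  ultimately show ?thesis using True by (simp add: Fpoly_def)
next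
  case False
  then show ?thesis by (simp add: Fpoly_def)
qed

definition EE :: "(nat \<Rightarrow> 'a::comm_ring_1) \<Rightarrow> nat set \<Rightarrow> nat \<Rightarrow> 'a" where
  "EE f A h = (\<Sum>S | S \<subseteq> A \<and> card S = h. \<Prod>i\<in>S. f i)"

lemma EE_0: "finite A \<Longrightarrow> EE f A 0 = 1"
proof -
  assume A: "finite A"
  have "{S. S \<subseteq> A \<and> card S = 0} = {{}}"
  proof (intro equalityI subsetI)
    fix S assume "S \<in> {S. S \<subseteq> A \<and> card S = 0}"
    then have "S \<subseteq> A" "card S = 0" by auto
    moreover have "finite S" using \<open>S \<subseteq> A\<close> A finite_subset by blast
    ultimately show "S \<in> {{}}" by simp
  qed auto
  then show ?thesis by (simp add: EE_def)
qed

lemma EE_big: "finite A \<Longrightarrow> h > card A \<Longrightarrow> EE f A h = 0"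
proof -
  assume A: "finite A" and h: "h > card A"
  have e: "{S. S \<subseteq> A \<and> card S = h} = {}" using h by (auto dest: card_mono[OF A])
  show ?thesis unfolding EE_def e by simp
qed

lemma EE_insert:
  assumes A: "finite A" and a: "a \<notin> A"
  shows "EE f (insert a A) (Suc h) = EE f A (Suc h) + f a * EE f A h"
proof -
  have fin: "finite {S. S \<subseteq> A \<and> card S = h'}" for h' using A by simp
  have seteq: "{S. S \<subseteq> insert a A \<and> card S = Suc h} =
      {S. S \<subseteq> A \<and> card S = Suc h} \<union> insert a ` {S. S \<subseteq> A \<and> card S = h}"
  proof (intro equalityI subsetI)
    fix S assume S: "S \<in> {S. S \<subseteq> insert a A \<and> card S = Suc h}"
    show "S \<in> {S. S \<subseteq> A \<and> card S = Suc h} \<union> insert a ` {S. S \<subseteq> A \<and> card S = h}"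
    proof (cases "a \<in> S")
      case True
      have "S = insert a (S - {a})" using True by auto
      moreover have "finite S" using S A by (auto intro: finite_subset)
      then have "card (S - {a}) = h" using S True by simp
      moreover have "S - {a} \<subseteq> A" using S by auto
      ultimately have "S - {a} \<in> {S. S \<subseteq> A \<and> card S = h}" "S = insert a (S - {a})" by simp_all
      then have "S \<in> insert a ` {S. S \<subseteq> A \<and> card S = h}" by (metis imageI)
      then show ?thesis by (rule UnI2)
    next
      case False
      then show ?thesis using S by auto
    qed
  next
    fix S assume S: "S \<in> {S. S \<subseteq> A \<and> card S = Suc h} \<union> insert a ` {S. S \<subseteq> A \<and> card S = h}"
    then show "S \<in> {S. S \<subseteq> insert a A \<and> card S = Suc h}"
    proof
      assume "S \<in> {S. S \<subseteq> A \<and> card S = Suc h}" then show ?thesis by auto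
    next
      assume "S \<in> insert a ` {S. S \<subseteq> A \<and> card S = h}"
      then obtain T where T: "T \<subseteq> A" "card T = h" "S = insert a T" by auto
      have "finite T" using T A by (auto intro: finite_subset)
      moreover have "a \<notin> T" using T a by auto
      ultimately show ?thesis using T by auto
    qed
  qed
  have disj: "{S. S \<subseteq> A \<and> card S = Suc h} \<inter> insert a ` {S. S \<subseteq> A \<and> card S = h} = {}"
    using a by auto
  have inj: "inj_on (insert a) {S. S \<subseteq> A \<and> card S = h}"
  proof (rule inj_onI)
    fix S T assume S: "S \<in> {S. S \<subseteq> A \<and> card S = h}" and T: "T \<in> {S. S \<subseteq> A \<and> card S = h}"
      and eq: "insert a S = insert a T"
    have "a \<notin> S" "a \<notin> T" using S T a by auto
    then show "S = T" by (metis Diff_insert_absorb eq)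
  qed
  have "EE f (insert a A) (Suc h) = EE f A (Suc h) + (\<Sum>S\<in>insert a ` {S. S \<subseteq> A \<and> card S = h}. \<Prod>i\<in>S. f i)"
    unfolding EE_def seteq by (rule sum.union_disjoint) (use fin disj in auto)
  also have "(\<Sum>S\<in>insert a ` {S. S \<subseteq> A \<and> card S = h}. \<Prod>i\<in>S. f i) =
      (\<Sum>S\<in>{S. S \<subseteq> A \<and> card S = h}. \<Prod>i\<in>insert a S. f i)"
    by (rule sum.reindex_cong[OF inj]) simp_all
  also have "\<dots> = (\<Sum>S\<in>{S. S \<subseteq> A \<and> card S = h}. f a * (\<Prod>i\<in>S. f i))"
  proof (rule sum.cong)
    fix S assume "S \<in> {S. S \<subseteq> A \<and> card S = h}"
    then have "finite S" "a \<notin> S" using A a by (auto intro: finite_subset)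
    then show "(\<Prod>i\<in>insert a S. f i) = f a * (\<Prod>i\<in>S. f i)" by simp
  qed simp
  also have "\<dots> = f a * EE f A h" by (simp add: EE_def sum_distrib_left)
  finally show ?thesis .
qed

lemma vieta_set:
  fixes f :: "nat \<Rightarrow> 'a::comm_ring_1"
  assumes A: "finite A"
  shows "coeff (\<Prod>i\<in>A. [:- f i, 1:]) d = (if d \<le> card A then (-1) ^ (card A - d) * EE f A (card A - d) else 0)"
  using A
proof (induction A arbitrary: d rule: finite_induct)
  case empty
  then show ?case by (simp add: EE_0)
next
  case (insert a A)
  define L where "L = card A"
  have cL: "card (insert a A) = Suc L" using insert by (simp add: L_def)
  have "coeff (\<Prod>i\<in>insert a A. [:- f i, 1:]) d = coeff ([:- f a, 1:] * (\<Prod>i\<in>A. [:- f i, 1:])) d"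
    using insert by simp
  also have "\<dots> = - f a * coeff (\<Prod>i\<in>A. [:- f i, 1:]) d + (if d = 0 then 0 else coeff (\<Prod>i\<in>A. [:- f i, 1:]) (d - 1))"
    by (simp add: coeff_pCons split: nat.split)
  also have "\<dots> = (if d \<le> Suc L then (-1) ^ (Suc L - d) * EE f (insert a A) (Suc L - d) else 0)"
  proof (cases d)
    case 0
    have "EE f (insert a A) (Suc L) = f a * EE f A L"
      using EE_insert[OF insert(1,2), of f L] EE_big[OF insert(1), of "Suc L"] by (simp add: L_def)
    then show ?thesis using 0 insert(3)[of 0] by (simp add: L_def)
  next
    case (Suc d')
    show ?thesis
    proof (cases "d \<le> L")
      case True
      have e: "Suc L - d = Suc (L - d)" "L - d' = Suc (L - d)" using True Suc by auto
      show ?thesis using insert(3)[of d] insert(3)[of d'] True Suc EE_insert[OF insert(1,2), of f "L - d"]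
        by (simp add: L_def[symmetric] e algebra_simps)
    next
      case False
      show ?thesis
      proof (cases "d = Suc L")
        case True
        then show ?thesis using insert(3)[of d] insert(3)[of d'] Suc EE_0[OF insert(1), of f] EE_0[of "insert a A" f] insert(1)
          by (simp add: L_def[symmetric])
      next
        case False
        then show ?thesis using \<open>\<not> d \<le> L\<close> insert(3)[of d] insert(3)[of d'] Suc
          by (simp add: L_def[symmetric])
      qed
    qed
  qed
  finally show ?case using cL by simp
qed

lemma prod_list_nth: "prod_list (map g xs) = (\<Prod>i<length xs. g (xs ! i))"
proof (induction xs)
  case Nil then show ?case by simp
next
  case (Cons x xs)
  then show ?case by (simp add: prod.lessThan_Suc_shift del: prod.lessThan_Suc)
qed

lemma esym_EE: "esym h xs = EE (\<lambda>i. xs ! i) {..<length xs} h"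
  by (simp add: esym_def EE_def)

lemma vieta_list:
  "coeff (\<Prod>x\<leftarrow>xs. [:- x, 1:]) d = (if d \<le> length xs then (-1) ^ (length xs - d) * esym (length xs - d) xs else 0)"
  unfolding prod_list_nth esym_EE by (subst vieta_set) auto

lemma EE_1: "finite A \<Longrightarrow> EE f A 1 = sum f A"
proof -
  assume A: "finite A"
  have "{S. S \<subseteq> A \<and> card S = 1} = (\<lambda>x. {x}) ` A" by (auto simp: card_1_singleton_iff)
  then have "EE f A 1 = (\<Sum>S\<in>(\<lambda>x. {x}) ` A. \<Prod>i\<in>S. f i)" by (simp add: EE_def)
  also have "\<dots> = sum f A" by (subst sum.reindex) (auto simp: inj_on_def)
  finally show ?thesis .
qed

lemma EE_card: "finite A \<Longrightarrow> EE f A (card A) = prod f A"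
proof -
  assume A: "finite A"
  have "{S. S \<subseteq> A \<and> card S = card A} = {A}" using A by (auto dest: card_subset_eq[OF A])
  then show ?thesis by (simp add: EE_def)
qed

lemma esym_1: "esym 1 xs = sum_list xs"
  using EE_1[of "{..<length xs}" "\<lambda>i. xs ! i"] by (simp add: esym_EE sum_list_sum_nth atLeast0LessThan)

lemma esym_len: "esym (length xs) xs = prod_list xs"
  using EE_card[of "{..<length xs}" "\<lambda>i. xs ! i"] prod_list_nth[of id xs] by (simp add: esym_EE)

lemma coeffF:
  assumes k: "k \<ge> 2" and r: "r < k" and m: "m = k * q + r"
  shows "(of_int (coeff (Fneg k m) (r + k * i)) :: rat) = (if i \<le> q then cc k (q - i) (r + k * i) else 0)"
proof -
  have "(of_int (coeff (Fneg k m) (r + k * i)) :: rat) = gcl k m (r + k * i)" by (rule Fneg_cl[OF k])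
  also have "\<dots> = (if i \<le> q then cc k (q - i) (r + k * i) else 0)"
  proof (cases "i \<le> q")
    case True
    have "m - (r + k * i) = k * (q - i)" using m True by (simp add: diff_mult_distrib2)
    moreover have "r + k * i \<le> m" using m True k by simp
    ultimately show ?thesis using True k by (simp add: gcl_def)
  next
    case False
    then have "k * q < k * i" using k by simp
    then have "\<not> r + k * i \<le> m" using m by simp
    then show ?thesis using False by (simp add: gcl_def)
  qed
  finally show ?thesis .
qed

lemma coeffF_zero:
  assumes k: "k \<ge> 2" and r: "r < k" and m: "m = k * q + r" and e: "e mod k \<noteq> r"
  shows "coeff (Fneg k m) e = 0"
proof -
  have "(of_int (coeff (Fneg k m) e) :: rat) = gcl k m e" by (rule Fneg_cl[OF k])
  also have "\<dots> = 0"
  proof -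
    have "\<not> (e \<le> m \<and> k dvd (m - e))"
    proof
      assume "e \<le> m \<and> k dvd (m - e)"
      then have "m mod k = e mod k" using mod_eq_dvd_iff_nat by blast
      then show False using m r e by simp
    qed
    then show ?thesis by (auto simp add: gcl_def)
  qed
  finally show ?thesis by simp
qed

lemma vieta_coeff:
  fixes P :: "int poly" and xs :: "complex list"
  assumes eq: "map_poly of_int P = smult (of_int (lead_coeff P)) (\<Prod>x\<leftarrow>xs. [:- x, 1:])"
    and len: "length xs = degree P" and h: "h \<le> degree P" and P: "P \<noteq> 0"
  shows "esym h xs = (-1) ^ h * of_int (coeff P (degree P - h)) / of_int (lead_coeff P)"
proof -
  have "coeff (map_poly (of_int :: int \<Rightarrow> complex) P) (degree P - h) = of_int (coeff P (degree P - h))"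
    by (simp add: coeff_map_poly)
  also have "coeff (map_poly (of_int :: int \<Rightarrow> complex) P) (degree P - h) =
      of_int (lead_coeff P) * ((-1) ^ h * esym h xs)"
    unfolding eq coeff_smult vieta_list using len h by simp
  finally have *: "of_int (lead_coeff P) * ((-1) ^ h * esym h xs) = (of_int (coeff P (degree P - h)) :: complex)" .
  have lc: "(of_int (lead_coeff P) :: complex) \<noteq> 0" using P by simp
  have "esym h xs = ((-1) ^ h * (-1) ^ h) * esym h xs" by (simp flip: power_mult_distrib)
  also have "\<dots> = (-1) ^ h * ((of_int (lead_coeff P) * ((-1) ^ h * esym h xs)) / of_int (lead_coeff P))"
    using lc by (simp add: field_simps)
  also have "\<dots> = (-1) ^ h * of_int (coeff P (degree P - h)) / of_int (lead_coeff P)"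
    by (simp only: *) simp
  finally show ?thesis .
qed

lemma Ck_cc: "j \<ge> 0 \<Longrightarrow> Ck k (- int p) j = cc k p (nat j)"
  by (simp add: Ck_def cc_def SS_def)

lemma minus_one_sq: "((-1::complex) ^ r) * (-1) ^ r = 1"
  by (simp flip: power_mult_distrib)

lemma div_m1: "(x::complex) / ((-1) ^ r * c) = (-1) ^ r * x / c"
  by (cases "even r") auto

lemma div_m1b: "((-1) ^ r * (x::complex)) / ((-1) ^ r * c) = x / c"
  by (cases "even r") auto

lemma frac_aux:
  fixes X Y R Q :: complex
  assumes "R * X = (Q - R) * Y" "Y \<noteq> 0" "R \<noteq> 0"
  shows "(R + 1) * X / Y = (R + 1) * (Q - R) / R"
proof -
  have "X / Y = (Q - R) / R" using assms by (simp add: frac_eq_eq mult.commute)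
  then show ?thesis by (metis times_divide_eq_right)
qed

lemma of_int_rat_complex: "(of_int x :: complex) = of_rat (of_int x)"
  by simp

lemma main_aux:
  fixes k :: nat and n :: int
  assumes k2: "k \<ge> 2" and n0: "n \<le> 0" and nz: "Fpoly k n \<noteq> 0"
  defines "q \<equiv> qnk n k" and "r \<equiv> rnk n k"
  defines "Nn \<equiv> (if r = 0 then q - 1 else q - r)"
  shows "(if r = 0 then int q - 1 else int q - int r) = int Nn"
    and "\<exists>!P :: int poly. Fpoly k n = monom 1 r * pcompose P (monom 1 k)"
    and "\<And>P. Fpoly k n = monom 1 r * pcompose P (monom 1 k) \<Longrightarrow> degree P = Nn"
    and "\<And>P (xs :: complex list) h. Fpoly k n = monom 1 r * pcompose P (monom 1 k) \<Longrightarrow>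
          length xs = Nn \<Longrightarrow> map_poly of_int P = smult (of_int (lead_coeff P)) (\<Prod>x\<leftarrow>xs. [:- x, 1:]) \<Longrightarrow>
          1 \<le> h \<Longrightarrow> h \<le> Nn \<Longrightarrow>
             esym h xs =
               (if r = 0 then (-1) ^ h * of_rat (Ck k (- (int h + 1)) (\<bar>n\<bar> + 1 - int k * (int h + 1)))
                else (-1) ^ (h + r) * of_rat (Ck k (- (int h + int r)) (\<bar>n\<bar> + 1 - int k * (int h + int r)))
                     / of_nat ((q - 1) choose (r - 1)))"
    and "\<And>P (xs :: complex list). Fpoly k n = monom 1 r * pcompose P (monom 1 k) \<Longrightarrow>
          length xs = Nn \<Longrightarrow> map_poly of_int P = smult (of_int (lead_coeff P)) (\<Prod>x\<leftarrow>xs. [:- x, 1:]) \<Longrightarrow>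
          1 \<le> Nn \<Longrightarrow>
               sum_list xs =
                 (if r = 0 \<and> k = 2 then - (2 * of_nat q - 3)
                  else if r = 0 then - (of_nat q - 1)
                  else - (of_nat (r + 1) * of_int (int q - int r) / of_nat r))
             \<and> prod_list xs =
                 (if r = 0 then (-1) ^ Nn
                  else (-1) ^ Nn * of_nat q / of_nat r)"
proof -
  define m where "m = nat (1 - n)"
  have m1: "m \<ge> 1" using n0 by (simp add: m_def)
  have mabs: "nat (\<bar>n\<bar> + 1) = m" using n0 by (simp add: m_def)
  have absn: "\<bar>n\<bar> + 1 = int m" using n0 by (simp add: m_def)
  have qm: "q = m div k" "r = m mod k" using mabs by (simp_all add: q_def r_def qnk_def rnk_def)
  have rk: "r < k" using k2 by (simp add: qm(2))
  have mqr: "m = k * q + r" by (simp add: qm)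
  have k1: "k \<ge> 1" using k2 by simp
  define F where "F = Fneg k m"
  have FF: "Fpoly k n = F" using Fpoly_neg[OF k2 n0] by (simp add: F_def m_def)
  have Fnz: "F \<noteq> 0" using nz FF by simp
  define a where "a i = coeff F (r + k * i)" for i
  have A: "(of_int (a i) :: rat) = (if i \<le> q then cc k (q - i) (r + k * i) else 0)" for i
    unfolding a_def F_def by (rule coeffF[OF k2 rk mqr])
  have Fz: "e mod k \<noteq> r \<Longrightarrow> coeff F e = 0" for e
    unfolding F_def by (rule coeffF_zero[OF k2 rk mqr])
  have edec: "e mod k = r \<Longrightarrow> e = r + k * (e div k)" for e
    by (metis mod_mult_div_eq)
  have Fe: "coeff F e = (if e mod k = r then a (e div k) else 0)" for e
  proof (cases "e mod k = r")
    case True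
    then have "coeff F e = a (e div k)" unfolding a_def using edec[OF True] by metis
    then show ?thesis using True by simp
  qed (simp add: Fz)
  have a_big: "i > q \<Longrightarrow> a i = 0" for i using A[of i] by simp
  have Pchar: "coeff P i = a i" if "F = monom 1 r * pcompose P (monom 1 k)" for P i
  proof -
    have "a i = coeff (monom 1 r * pcompose P (monom 1 k)) (r + k * i)" unfolding a_def using that by simp
    also have "\<dots> = coeff P i" using k2 by (simp add: coeff_monom_mult coeff_pcompose_monom)
    finally show ?thesis by simp
  qed
  define P0 where "P0 = (\<Sum>i\<le>q. monom (a i) i)"
  have P0c: "coeff P0 i = a i" for i
    using a_big[of i] by (auto simp: P0_def coeff_sum coeff_monom)
  have P0eq: "F = monom 1 r * pcompose P0 (monom 1 k)"
  proof (rule poly_eqI)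
    fix e
    show "coeff F e = coeff (monom 1 r * pcompose P0 (monom 1 k)) e"
    proof (cases "e mod k = r")
      case True
      have e: "e - r = k * (e div k)" "\<not> e < r" using edec[OF True] by linarith+
      then show ?thesis using True k2 by (simp add: Fe coeff_monom_mult coeff_pcompose_monom P0c)
    next
      case False
      have "\<not> (r \<le> e \<and> k dvd (e - r))"
      proof
        assume "r \<le> e \<and> k dvd (e - r)"
        then have "e mod k = r mod k" using mod_eq_dvd_iff_nat by blast
        with rk False show False by simp
      qed
      then show ?thesis using False k2 by (auto simp: Fe coeff_monom_mult coeff_pcompose_monom)
    qed
  qed
  show "\<exists>!P :: int poly. Fpoly k n = monom 1 r * pcompose P (monom 1 k)"
    unfolding FF
  proof (rule ex1I[of _ P0])
    show "F = monom 1 r * pcompose P0 (monom 1 k)" by (rule P0eq)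
  next
    fix P assume "F = monom 1 r * pcompose P (monom 1 k)"
    then show "P = P0" using Pchar P0c by (intro poly_eqI) simp
  qed
  have qpos: "r = 0 \<Longrightarrow> q \<ge> 1" using m1 mqr by (cases q) auto
  have qr: "q \<ge> r"
  proof (rule ccontr)
    assume "\<not> q \<ge> r"
    then have r0: "q < r" by simp
    have "a i = 0" for i
    proof (cases "i \<le> q")
      case True
      have "q - i < r + k" using r0 by linarith
      then have "cc k (q - i) (r + k * i) = 0"
        using cc_spec[OF k1 rk, where p="q - i" and n="r + k * i" and j=i] r0 True by simp
      then show ?thesis using A[of i] True by simp
    qed (simp add: a_big)
    then have "F = 0" using Fe by (intro poly_eqI) simp
    with Fnz show False by simp
  qed
  show "(if r = 0 then int q - 1 else int q - int r) = int Nn" using qpos qr by (auto simp: Nn_def)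
  have AN: "(of_int (a Nn) :: rat) = (if r = 0 then 1 else (-1) ^ r * of_nat ((q - 1) choose (r - 1)))"
  proof (cases "r = 0")
    case True
    have "cc k 1 (k * (q - 1)) = 1" using cc_spec[OF k1, where s=0 and p=1 and n="k * (q - 1)" and j="q - 1"] k2 by simp
    then show ?thesis using True A[of Nn] qpos by (simp add: Nn_def)
  next
    case False
    have "cc k r (r + k * (q - r)) = (-1) ^ r * of_nat ((q - r + r - 1) choose (q - r))"
      using cc_spec[OF k1 rk, where p=r and n="r + k * (q - r)" and j="q - r"] k2 by simp
    moreover have "(q - r + r - 1) choose (q - r) = (q - 1) choose (r - 1)"
    proof -
      have "q - r + r - 1 = q - 1" using qr by simp
      moreover have "(q - 1) - (r - 1) = q - r" using qr False by simp
      moreover have "r - 1 \<le> q - 1" using qr by simp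
      ultimately show ?thesis using binomial_symmetric[of "r - 1" "q - 1"] by simp
    qed
    ultimately show ?thesis using False A[of Nn] qr by (simp add: Nn_def)
  qed
  have aN: "a Nn \<noteq> 0"
  proof
    assume "a Nn = 0"
    then have "(of_int (a Nn) :: rat) = 0" by simp
    then show False using AN qr by (auto split: if_splits)
  qed
  have a_above: "a i = 0" if "i > Nn" for i
  proof (cases "i \<le> q")
    case True
    show ?thesis
    proof (cases "r = 0")
      case r0: True
      then have "i = q" using that True by (simp add: Nn_def)
      have "cc k 0 (r + k * i) = 0" using r0 \<open>i = q\<close> qpos k2 by (simp add: cc_0)
      then show ?thesis using A[of i] True \<open>i = q\<close> by simp
    next
      case False
      have "cc k (q - i) (r + k * i) = 0"
        using cc_spec[OF k1 rk, where p="q - i" and n="r + k * i" and j=i] that False True by (simp add: Nn_def)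
      then show ?thesis using A[of i] True by simp
    qed
  qed (simp add: a_big)
  have degP: "degree P = Nn" and lcP: "lead_coeff P = a Nn"
    if "F = monom 1 r * pcompose P (monom 1 k)" for P
  proof -
    show "degree P = Nn"
    proof (rule antisym)
      show "degree P \<le> Nn" using Pchar[OF that] a_above by (intro degree_le) auto
      show "Nn \<le> degree P" using Pchar[OF that] aN by (intro le_degree) simp
    qed
    then show "lead_coeff P = a Nn" using Pchar[OF that] by simp
  qed
  show "\<And>P. Fpoly k n = monom 1 r * pcompose P (monom 1 k) \<Longrightarrow> degree P = Nn"
    using degP FF by simp
  have esymA: "esym h xs = (-1) ^ h * of_rat (of_int (a (Nn - h))) / of_rat (of_int (a Nn))"
    if P: "F = monom 1 r * pcompose P (monom 1 k)" and len: "length xs = Nn"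
      and eq: "map_poly of_int P = smult (of_int (lead_coeff P)) (\<Prod>x\<leftarrow>xs. [:- x, 1:])"
      and h: "h \<le> Nn" for P xs h
  proof -
    have Pnz: "P \<noteq> 0" using lcP[OF P] aN by auto
    have "esym h xs = (-1) ^ h * of_int (coeff P (degree P - h)) / of_int (lead_coeff P)"
      by (rule vieta_coeff[OF eq]) (use len h degP[OF P] Pnz in auto)
    then show ?thesis using degP[OF P] lcP[OF P] Pchar[OF P] by (simp only: of_int_rat_complex)
  qed
  show "esym h xs =
               (if r = 0 then (-1) ^ h * of_rat (Ck k (- (int h + 1)) (\<bar>n\<bar> + 1 - int k * (int h + 1)))
                else (-1) ^ (h + r) * of_rat (Ck k (- (int h + int r)) (\<bar>n\<bar> + 1 - int k * (int h + int r)))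
                     / of_nat ((q - 1) choose (r - 1)))"
    if P: "Fpoly k n = monom 1 r * pcompose P (monom 1 k)" and len: "length xs = Nn"
      and eq: "map_poly of_int P = smult (of_int (lead_coeff P)) (\<Prod>x\<leftarrow>xs. [:- x, 1:])"
      and h1: "1 \<le> h" and h: "h \<le> Nn" for P xs h
  proof -
    have P': "F = monom 1 r * pcompose P (monom 1 k)" using P FF by simp
    note E = esymA[OF P' len eq h]
    show ?thesis
    proof (cases "r = 0")
      case True
      have i: "Nn - h \<le> q" "q - (Nn - h) = h + 1" "r + k * (Nn - h) = k * (q - 1 - h)" "Nn - h = q - 1 - h"
        using True h qpos by (auto simp: Nn_def)
      have j: "\<bar>n\<bar> + 1 - int k * (int h + 1) = int (k * (q - 1 - h))"
      proof -
        have "h + 1 \<le> q" using h qpos True by (simp add: Nn_def)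
        then have le: "k * (h + 1) \<le> k * q" by (rule mult_le_mono2)
        have "k * (q - 1 - h) = k * q - k * (h + 1)" by (simp add: diff_mult_distrib2)
        then have "int (k * (q - 1 - h)) = int (k * q) - int (k * (h + 1))" using le by (simp add: of_nat_diff)
        then show ?thesis using absn mqr True by (simp add: algebra_simps)
      qed
      have "Ck k (- (int h + 1)) (\<bar>n\<bar> + 1 - int k * (int h + 1)) = cc k (h + 1) (k * (q - 1 - h))"
      proof -
        have "Ck k (- (int h + 1)) (\<bar>n\<bar> + 1 - int k * (int h + 1)) = Ck k (- int (h + 1)) (int (k * (q - 1 - h)))"
        proof -
          have "- (int h + 1) = - int (h + 1)" by simp
          then show ?thesis unfolding j by (simp only:)
        qed
        also have "\<dots> = cc k (h + 1) (nat (int (k * (q - 1 - h))))" by (rule Ck_cc) simp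
        finally show ?thesis by (simp only: nat_int)
      qed
      moreover have C1: "rat_of_int (a (Nn - h)) = cc k (h + 1) (k * (q - 1 - h))"
        using A[of "Nn - h"] i by simp
      moreover have AN1: "rat_of_int (a Nn) = 1" using AN True by simp
      moreover have "esym h xs = (-1) ^ h * of_rat (cc k (h + 1) (k * (q - 1 - h))) / of_rat 1"
        using E by (simp only: C1 AN1)
      ultimately show ?thesis using True by simp
    next
      case False
      have i: "Nn - h \<le> q" "q - (Nn - h) = h + r" "r + k * (Nn - h) = r + k * (q - r - h)" "Nn - h = q - r - h"
        using False h qr by (auto simp: Nn_def)
      have j: "\<bar>n\<bar> + 1 - int k * (int h + int r) = int (r + k * (q - r - h))"
      proof -
        have "h + r \<le> q" using h qr False by (simp add: Nn_def)
        then have le: "k * (h + r) \<le> k * q" by (rule mult_le_mono2)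
        have "k * (q - r - h) = k * q - k * (h + r)" by (simp add: diff_mult_distrib2 add.commute)
        then have "int (k * (q - r - h)) = int (k * q) - int (k * (h + r))" using le by (simp add: of_nat_diff)
        then show ?thesis using absn mqr by (simp add: algebra_simps)
      qed
      have "Ck k (- (int h + int r)) (\<bar>n\<bar> + 1 - int k * (int h + int r)) = cc k (h + r) (r + k * (q - r - h))"
      proof -
        have "Ck k (- (int h + int r)) (\<bar>n\<bar> + 1 - int k * (int h + int r)) = Ck k (- int (h + r)) (int (r + k * (q - r - h)))"
        proof -
          have "- (int h + int r) = - int (h + r)" by simp
          then show ?thesis unfolding j by (simp only:)
        qed
        also have "\<dots> = cc k (h + r) (nat (int (r + k * (q - r - h))))" by (rule Ck_cc) simp
        finally show ?thesis by (simp only: nat_int)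
      qed
      then have C: "rat_of_int (a (Nn - h)) = Ck k (- (int h + int r)) (\<bar>n\<bar> + 1 - int k * (int h + int r))"
        using A[of "Nn - h"] i by simp
      have AN1: "rat_of_int (a Nn) = (-1) ^ r * of_nat ((q - 1) choose (r - 1))" using AN False by simp
      have "esym h xs = (-1) ^ h * of_rat (Ck k (- (int h + int r)) (\<bar>n\<bar> + 1 - int k * (int h + int r)))
           / of_rat ((-1) ^ r * of_nat ((q - 1) choose (r - 1)))"
        using E by (simp only: C AN1)
      also have "\<dots> = (-1) ^ h * of_rat (Ck k (- (int h + int r)) (\<bar>n\<bar> + 1 - int k * (int h + int r)))
           / ((-1) ^ r * of_nat ((q - 1) choose (r - 1)))"
        by (simp add: of_rat_mult of_rat_power)
      also have "\<dots> = (-1) ^ (h + r) * of_rat (Ck k (- (int h + int r)) (\<bar>n\<bar> + 1 - int k * (int h + int r)))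
           / of_nat ((q - 1) choose (r - 1))"
        by (simp add: div_m1 power_add mult.left_commute)
      finally show ?thesis using False by simp
    qed
  qed
  show "sum_list xs =
                 (if r = 0 \<and> k = 2 then - (2 * of_nat q - 3)
                  else if r = 0 then - (of_nat q - 1)
                  else - (of_nat (r + 1) * of_int (int q - int r) / of_nat r))
             \<and> prod_list xs =
                 (if r = 0 then (-1) ^ Nn
                  else (-1) ^ Nn * of_nat q / of_nat r)"
    if P: "Fpoly k n = monom 1 r * pcompose P (monom 1 k)" and len: "length xs = Nn"
      and eq: "map_poly of_int P = smult (of_int (lead_coeff P)) (\<Prod>x\<leftarrow>xs. [:- x, 1:])"
      and N1: "1 \<le> Nn" for P and xs :: "complex list"
  proof
    have P': "F = monom 1 r * pcompose P (monom 1 k)" using P FF by simp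
    have S: "sum_list xs = esym 1 xs" by (rule esym_1[symmetric])
    have Pr: "prod_list xs = esym Nn xs" using len esym_len[of xs] by simp
    note E1 = esymA[OF P' len eq N1]
    note EN = esymA[OF P' len eq order.refl]
    show "sum_list xs = (if r = 0 \<and> k = 2 then - (2 * of_nat q - 3)
                  else if r = 0 then - (of_nat q - 1)
                  else - (of_nat (r + 1) * of_int (int q - int r) / of_nat r))"
    proof (cases "r = 0")
      case True
      have q2: "q \<ge> 2" using N1 True by (simp add: Nn_def)
      have i: "Nn - 1 = q - 2" "q - (q - 2) = 2" using True q2 by (simp_all add: Nn_def)
      have A1: "rat_of_int (a (Nn - 1)) = cc k 2 (k * (q - 2))" using A[of "Nn - 1"] i True by simp
      have AN1: "rat_of_int (a Nn) = 1" using AN True by simp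
      have S1: "esym 1 xs = (-1) ^ 1 * of_rat (cc k 2 (k * (q - 2))) / of_rat 1"
        using E1 by (simp only: A1 AN1)
      show ?thesis
      proof (cases "k = 2")
        case True
        have "cc k 2 (k * (q - 2)) = 2 * of_nat (q - 2) + 1" using cc_2_2[of "q - 2"] True by simp
        then show ?thesis using S S1 True \<open>r = 0\<close> q2 by (simp add: of_nat_diff of_rat_diff of_rat_add of_rat_mult)
      next
        case False
        have "cc k 2 (k * (q - 2)) = of_nat ((q - 2 + 2 - 1) choose (q - 2))"
          using cc_spec[OF k1, where s=0 and p=2 and n="k * (q - 2)" and j="q - 2"] k2 False by simp
        also have "(q - 2 + 2 - 1) choose (q - 2) = q - 1"
        proof -
          have "q - 2 + 2 - 1 = Suc (q - 2)" using q2 by simp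
          then show ?thesis using binomial_Suc_n[of "q - 2"] q2 by simp
        qed
        finally show ?thesis using S S1 False \<open>r = 0\<close> q2 by (simp add: of_nat_diff of_rat_diff)
      qed
    next
      case False
      have qr1: "q - r \<ge> 1" using N1 False by (simp add: Nn_def)
      have i: "Nn - 1 = q - r - 1" "q - (q - r - 1) = r + 1" "Nn - 1 \<le> q" using qr1 False qr by (simp_all add: Nn_def)
      have A1: "rat_of_int (a (Nn - 1)) = cc k (r + 1) (r + k * (q - r - 1))" using A[of "Nn - 1"] i by simp
      have cc1: "cc k (r + 1) (r + k * (q - r - 1)) = (-1) ^ r * (of_nat (r + 1) * of_nat ((q - 1) choose (q - r - 1)))"
      proof -
        have "cc k (r + 1) (r + k * (q - r - 1)) = (-1) ^ r * of_nat ((r + 1) choose r) * of_nat ((q - r - 1 + (r + 1) - 1) choose (q - r - 1))"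
          using cc_spec[OF k1 rk, where p="r + 1" and n="r + k * (q - r - 1)" and j="q - r - 1"] k2 by simp
        moreover have "(r + 1) choose r = r + 1" using binomial_Suc_n[of r] by simp
        moreover have "q - r - 1 + (r + 1) - 1 = q - 1" using qr1 by simp
        ultimately show ?thesis by simp
      qed
      have AN1: "rat_of_int (a Nn) = (-1) ^ r * of_nat ((q - 1) choose (r - 1))" using AN False by simp
      have "esym 1 xs = (-1) ^ 1 * of_rat ((-1) ^ r * (of_nat (r + 1) * of_nat ((q - 1) choose (q - r - 1))))
          / of_rat ((-1) ^ r * of_nat ((q - 1) choose (r - 1)))"
        using E1 by (simp only: A1 cc1 AN1)
      also have "\<dots> = - (((-1) ^ r * (of_nat (r + 1) * of_nat ((q - 1) choose (q - r - 1))))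
          / ((-1) ^ r * of_nat ((q - 1) choose (r - 1))))"
        by (simp add: of_rat_mult of_rat_power of_rat_add)
      also have "\<dots> = - (of_nat (r + 1) * of_nat ((q - 1) choose (q - r - 1)) / of_nat ((q - 1) choose (r - 1)))"
        by (simp only: div_m1b)
      finally have S1: "esym 1 xs = - (of_nat (r + 1) * of_nat ((q - 1) choose (q - r - 1)) / of_nat ((q - 1) choose (r - 1)))" .
      have bin: "r * ((q - 1) choose (q - r - 1)) = (q - r) * ((q - 1) choose (r - 1))"
      proof -
        obtain r' where r': "r = Suc r'" using False by (cases r) auto
        have sym: "(q - 1) choose (q - r - 1) = (q - 1) choose r"
          using binomial_symmetric[of r "q - 1"] qr1 by (simp add: diff_commute)
        have "Suc r' * ((q - 1) choose Suc r') = (q - 1) * ((q - 1 - 1) choose r')" by (rule binomial_absorption)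
        moreover have "((q - 1) - r') * ((q - 1) choose r') = (q - 1) * ((q - 1 - 1) choose r')" by (rule binomial_absorb_comp)
        moreover have "(q - 1) - r' = q - r" using r' qr1 by simp
        ultimately show ?thesis using sym r' by simp
      qed
      have binc: "(of_nat r :: complex) * of_nat ((q - 1) choose (q - r - 1)) = (of_nat q - of_nat r) * of_nat ((q - 1) choose (r - 1))"
      proof -
        have "(of_nat (r * ((q - 1) choose (q - r - 1))) :: complex) = of_nat ((q - r) * ((q - 1) choose (r - 1)))"
          using bin by (simp only:)
        then show ?thesis using qr by (simp add: of_nat_diff)
      qed
      have C0: "(of_nat ((q - 1) choose (r - 1)) :: complex) \<noteq> 0" using qr by simp
      have rnz: "(of_nat r :: complex) \<noteq> 0" using False by simp
      have "esym 1 xs = - (of_nat (r + 1) * of_int (int q - int r) / of_nat r)"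
        unfolding S1 using frac_aux[OF binc C0 rnz] qr by (simp add: of_nat_diff add.commute)
      then show ?thesis using S False by simp
    qed
    show "prod_list xs = (if r = 0 then (-1) ^ Nn else (-1) ^ Nn * of_nat q / of_nat r)"
    proof (cases "r = 0")
      case True
      have A0: "rat_of_int (a (Nn - Nn)) = 1" using A[of 0] True cc_small[OF k1, of 0 q] k2 by simp
      have AN1: "rat_of_int (a Nn) = 1" using AN True by simp
      have "esym Nn xs = (-1) ^ Nn * of_rat 1 / of_rat 1" using EN by (simp only: A0 AN1)
      then show ?thesis using Pr True by simp
    next
      case False
      have A0: "rat_of_int (a (Nn - Nn)) = (-1) ^ r * of_nat (q choose r)" using A[of 0] cc_small[OF k1 rk, of q] by simp
      have AN1: "rat_of_int (a Nn) = (-1) ^ r * of_nat ((q - 1) choose (r - 1))" using AN False by simp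
      have "esym Nn xs = (-1) ^ Nn * of_rat ((-1) ^ r * of_nat (q choose r)) / of_rat ((-1) ^ r * of_nat ((q - 1) choose (r - 1)))"
        using EN by (simp only: A0 AN1)
      also have "\<dots> = (-1) ^ Nn * (((-1) ^ r * of_nat (q choose r)) / ((-1) ^ r * of_nat ((q - 1) choose (r - 1))))"
        by (simp add: of_rat_mult of_rat_power)
      also have "\<dots> = (-1) ^ Nn * (of_nat (q choose r) / of_nat ((q - 1) choose (r - 1)))"
        by (simp only: div_m1b)
      finally have S1: "esym Nn xs = (-1) ^ Nn * (of_nat (q choose r) / of_nat ((q - 1) choose (r - 1)))" .
      have bin: "r * (q choose r) = q * ((q - 1) choose (r - 1))"
      proof -
        obtain r' where r': "r = Suc r'" using False by (cases r) auto
        show ?thesis using binomial_absorption[of r' q] r' by simp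
      qed
      have binc: "(of_nat r :: complex) * of_nat (q choose r) = of_nat q * of_nat ((q - 1) choose (r - 1))"
        using bin by (metis of_nat_mult)
      have C0: "(of_nat ((q - 1) choose (r - 1)) :: complex) \<noteq> 0" using qr by simp
      have rnz: "(of_nat r :: complex) \<noteq> 0" using False by simp
      have "esym Nn xs = (-1) ^ Nn * of_nat q / of_nat r"
        unfolding S1 using binc C0 rnz by (simp add: field_simps)
      then show ?thesis using Pr False by simp
    qed
  qed
qed

theorem mainTheorem18:
  fixes k :: nat and n :: int
  assumes "k \<ge> 2" and "n \<le> 0" and "Fpoly k n \<noteq> 0"
  shows "(\<exists>!P :: int poly. Fpoly k n = monom 1 (rnk n k) * pcompose P (monom 1 k))
    \<and> (\<forall>P :: int poly. Fpoly k n = monom 1 (rnk n k) * pcompose P (monom 1 k) \<longrightarrow>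
      (let q = qnk n k; r = rnk n k;
           N = (if r = 0 then int q - 1 else int q - int r) in
        int (degree P) = N \<and>
        (\<forall>xs :: complex list. length xs = nat N \<and>
            map_poly of_int P = smult (of_int (lead_coeff P)) (\<Prod>x\<leftarrow>xs. [:- x, 1:]) \<longrightarrow>
          (\<forall>h :: nat. 1 \<le> h \<and> int h \<le> N \<longrightarrow>
             esym h xs =
               (if r = 0 then (-1) ^ h * of_rat (Ck k (- (int h + 1)) (\<bar>n\<bar> + 1 - int k * (int h + 1)))
                else (-1) ^ (h + r) * of_rat (Ck k (- (int h + int r)) (\<bar>n\<bar> + 1 - int k * (int h + int r)))
                     / of_nat ((q - 1) choose (r - 1))))
          \<and> (N \<ge> 1 \<longrightarrow>
               sum_list xs =
                 (if r = 0 \<and> k = 2 then - (2 * of_nat q - 3)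
                  else if r = 0 then - (of_nat q - 1)
                  else - (of_nat (r + 1) * of_int (int q - int r) / of_nat r))
             \<and> prod_list xs =
                 (if r = 0 then (-1) ^ nat N
                  else (-1) ^ nat N * of_nat q / of_nat r)))))"
proof -
  note M = main_aux[OF assms]
  have N: "(if rnk n k = 0 then int (qnk n k) - 1 else int (qnk n k) - int (rnk n k)) =
     int (if rnk n k = 0 then qnk n k - 1 else qnk n k - rnk n k)" by (rule M(1))
  show ?thesis
    unfolding Let_def N nat_int of_nat_le_iff of_nat_eq_iff
    using M(2) M(3) M(4) M(5) by auto
qed


end
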